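(* Let $F(n)$ be the Fibonacci sequence, $F(0)=0$, $F(1)=1$, $F(n+2)=F(n+1)+F(n)$. Then $$\lim_{\alpha\to\infty}\frac{|\{F(n)\bmod 11^\alpha:n\ge0\}|}{11^\alpha}=\frac{145}{264}.$$ *)

theory Defs
  imports Complex_Main "HOL-Number_Theory.Fib"
begin

end

theory Submission
  imports Defs "HOL-Number_Theory.Number_Theory"
begin
lemma p11n: "prime (11::nat)" 
proof -
  have "{2..<11::nat} = {2,3,4,5,6,7,8,9,10}" by auto
  thus ?thesis by (simp add: prime_nat_iff')
qed
lemma p11: "prime (11::int)" using p11n by (simp add: prime_int_nat_transfer)

lemma dvd11pow_cancel: fixes u X :: int assumes "11^a dvd u * X" "\<not> 11 dvd u" shows "11^a dvd X"
proof -
  have "coprime 11 u" using prime_imp_coprime[OF p11 assms(2)] .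
  hence "coprime (11^a) u" by simp
  thus ?thesis using assms(1) coprime_dvd_mult_right_iff by blast
qed

lemma hensel:
  fixes b c z0 :: int and j a :: nat
  assumes j: "j \<ge> 1" and h0: "11^j dvd z0^2 + b*z0 + c" and nd: "\<not> 11 dvd 2*z0 + b" and a: "a \<ge> j"
  shows "\<exists>z. 11^j dvd z - z0 \<and> 11^a dvd z^2 + b*z + c"
using a
proof (induction a rule: dec_induct)
  case base thus ?case using h0 by (intro exI[of _ z0]) auto
next
  case (step a)
  then obtain z where z1: "11^j dvd z - z0" and z2: "11^a dvd z^2+b*z+c" by blast
  obtain k where k: "z^2+b*z+c = 11^a * k" using z2 by (auto elim: dvdE)
  have "(11::int) dvd 11^j" using j by (simp add: dvd_power)
  hence "11 dvd z - z0" using z1 dvd_trans by blast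
  hence "11 dvd (2*z+b) - (2*z0+b)" using dvd_mult[OF \<open>11 dvd z - z0\<close>, of 2] by (simp add: algebra_simps)
  hence nd': "\<not> 11 dvd 2*z+b"
  proof (intro notI)
    assume h: "11 dvd (2*z+b) - (2*z0+b)" "11 dvd 2*z+b"
    hence "11 dvd (2*z+b) - ((2*z+b) - (2*z0+b))" using dvd_diff by blast
    thus False using nd by (simp add: add.commute)
  qed
  have "coprime (2*z+b) 11" using prime_imp_coprime[OF p11 nd'] by (simp add: coprime_commute)
  then obtain e where e: "[(2*z+b)*e = 1] (mod 11)" using cong_solve_coprime_int by blast
  hence e': "11 dvd 1 - (2*z+b)*e" by (simp add: cong_iff_dvd_diff dvd_diff_commute)
  define t where "t = - k * e"
  define z' where "z' = z + t*11^a"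
  have eq: "z'^2 + b*z' + c = 11^a * (k * (1 - (2*z+b)*e)) + t^2 * 11^(2*a)"
    unfolding z'_def t_def using k by (simp add: power2_eq_square power_mult algebra_simps)
  have d1: "11^(Suc a) dvd 11^a * (k * (1 - (2*z+b)*e))"
    using e' by (simp add: mult_dvd_mono)
  have "(11::int)^(Suc a) dvd 11^(2*a)" using step.hyps j by (intro le_imp_power_dvd) auto
  hence d2: "11^(Suc a) dvd t^2 * 11^(2*a)" by simp
  have "11^(Suc a) dvd z'^2 + b*z' + c" unfolding eq using d1 d2 by simp
  moreover have "11^j dvd z' - z0"
  proof -
    have "(11::int)^j dvd 11^a" using step.hyps by (intro le_imp_power_dvd) auto
    hence "11^j dvd t*11^a" by (rule dvd_mult)
    moreover have "z' - z0 = (z - z0) + t*11^a" unfolding z'_def by simp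
    moreover have "11^j dvd (z - z0) + t*11^a" using z1 \<open>11^j dvd t*11^a\<close> by (rule dvd_add)
    ultimately show ?thesis by (simp add: diff_add_eq)
  qed
  ultimately show ?case by blast
qed

lemma mod11_cases:
  fixes z :: int
  obtains "z mod 11 = 0" | "z mod 11 = 1" | "z mod 11 = 2" | "z mod 11 = 3" | "z mod 11 = 4"
   | "z mod 11 = 5" | "z mod 11 = 6" | "z mod 11 = 7" | "z mod 11 = 8" | "z mod 11 = 9" | "z mod 11 = 10"
proof -
  have "z mod 11 \<ge> 0" "z mod 11 < 11" by auto
  then have "z mod 11 = 0 \<or> z mod 11 = 1 \<or> z mod 11 = 2 \<or> z mod 11 = 3 \<or> z mod 11 = 4 \<or> z mod 11 = 5 \<or> z mod 11 = 6 \<or> z mod 11 = 7 \<or> z mod 11 = 8 \<or> z mod 11 = 9 \<or> z mod 11 = 10" by presburger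
  then show ?thesis by (elim disjE) (erule that)+
qed

lemma pow5_mod11: "(z::int)^5 mod 11 = (z mod 11)^5 mod 11"
  by (simp add: power_mod)

lemma unit_pow5: assumes "\<not> (11::int) dvd z" shows "z^5 mod 11 = 1 \<or> z^5 mod 11 = 10"
proof -
  have "z mod 11 \<noteq> 0" using assms by auto
  then show ?thesis unfolding pow5_mod11[of z] by (cases z rule: mod11_cases) auto
qed

lemma mod11_pow5_cases:
  fixes z :: int
  shows "z^5 mod 11 = (if z mod 11 = 0 then 0 else if z mod 11 \<in> {1,3,4,5,9} then 1 else 10)"
  unfolding pow5_mod11[of z] by (cases z rule: mod11_cases) auto

lemma sqrt_lift:
  fixes d :: int assumes "d^5 mod 11 = 1" shows "\<exists>s. 11^a dvd s^2 - d"
proof (cases "a = 0")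
  case True thus ?thesis by simp
next
  case False
  have "d mod 11 \<in> {1,3,4,5,9}" using assms mod11_pow5_cases[of d] by (auto split: if_splits)
  hence "\<exists>z0::int. z0^2 mod 11 = d mod 11 \<and> z0 \<in> {1,2,3,4,5}" 
    by (auto intro: exI[of _ 1] exI[of _ 2] exI[of _ 3] exI[of _ 4] exI[of _ 5])
  then obtain z0 :: int where z0: "z0^2 mod 11 = d mod 11" "z0 \<in> {1,2,3,4,5}" by blast
  have h0: "11^1 dvd z0^2 + 0*z0 + (-d)" using z0(1) by (simp add: mod_eq_dvd_iff)
  have nd: "\<not> 11 dvd 2*z0 + 0" using z0(2) by auto
  obtain z where "11^a dvd z^2 + 0*z + (-d)"
    using hensel[OF _ h0 nd, of a] False by auto
  thus ?thesis by auto
qed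

lemma phi_lift:
  assumes "a \<ge> 2" shows "\<exists>\<phi>::int. 121 dvd \<phi> - 85 \<and> 11^a dvd \<phi>^2 - \<phi> - 1"
proof -
  have h0: "11^2 dvd (85::int)^2 + (-1)*85 + (-1)" by simp
  have nd: "\<not> (11::int) dvd 2*85 + (-1)" by simp
  from hensel[OF _ h0 nd assms] show ?thesis by auto
qed

lemma ord_11_8: "ord 11 (8::nat) = 10"
proof -
  have c: "coprime (11::nat) 8" using prime_imp_coprime[OF p11n, of 8] by simp
  have d10: "ord 11 (8::nat) dvd 10" unfolding ord_divides'[symmetric] by (simp add: cong_def)
  have n2: "\<not> ord 11 (8::nat) dvd 2" unfolding ord_divides'[symmetric] by (simp add: cong_def)
  have n5: "\<not> ord 11 (8::nat) dvd 5" unfolding ord_divides'[symmetric] by (simp add: cong_def)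
  have n1: "\<not> ord 11 (8::nat) dvd 1" unfolding ord_divides'[symmetric] by (simp add: cong_def)
  have "ord 11 (8::nat) \<le> 10" using d10 by (rule dvd_imp_le) simp
  moreover have "ord 11 (8::nat) \<noteq> 0" using c by (subst ord_eq_0) simp
  ultimately have "ord 11 (8::nat) \<in> {1,2,3,4,5,6,7,8,9,10}" 
    by (simp only: insert_iff empty_iff) presburger
  thus ?thesis using d10 n2 n5 n1 by auto
qed

lemma primroot_phi:
  fixes \<phi> :: int
  assumes a: "a \<ge> 2" and h: "121 dvd \<phi> - 85"
  shows "residue_primroot (11^a) (nat (\<phi> mod 11^a))"
proof -
  define g where "g = nat (\<phi> mod 11^a)"
  have gi: "int g = \<phi> mod 11^a" unfolding g_def by simp
  have "(11::int)^a = 11^2 * 11^(a-2)" using a by (metis le_add_diff_inverse power_add)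
  hence "(121::int) dvd 11^a" by simp
  hence "\<phi> mod 11^a mod 121 = \<phi> mod 121" by (simp add: mod_mod_cancel)
  also have "\<phi> mod 121 = 85 mod 121" using h mod_eq_dvd_iff[of \<phi> 121 85] by presburger
  finally have g121: "int g mod 121 = 85" using gi by simp
  hence "int (g mod 121) = 85" by (simp add: of_nat_mod)
  hence g121n: "g mod 121 = 85" by simp
  have "g mod 11 = g mod 121 mod 11" by (simp add: mod_mod_cancel)
  hence g11: "g mod 11 = 8" using g121n by simp
  have p11r: "residue_primroot 11 g"
    using residue_primroot_mod[of 11 g] g11 ord_11_8 p11n prime_imp_coprime[OF p11n, of 8]
    by (simp add: residue_primroot_def totient_prime)
  have "g^10 mod 121 = (g mod 121)^10 mod 121" by (simp add: power_mod)
  also have "\<dots> = 111" using g121n by simp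
  finally have "[g ^ (11 - 1) \<noteq> 1] (mod 11\<^sup>2)" by (simp add: cong_def)
  hence "\<forall>k>0. residue_primroot (11 ^ k) g"
    using residue_primroot_prime_lift_iff[OF p11n _ p11r] by simp
  hence "residue_primroot (11 ^ a) g" using a by simp
  thus ?thesis unfolding g_def .
qed


lemma binet_mod:
  fixes \<phi> M :: int
  assumes h: "M dvd \<phi>^2 - \<phi> - 1"
  shows "M dvd (2*\<phi>-1) * int (fib n) - (\<phi>^n - (1-\<phi>)^n)"
proof (induction n rule: fib.induct)
  case 1 thus ?case by simp
next
  case 2 thus ?case by simp
next
  case (3 n)
  define e where "e k = (2*\<phi>-1) * int (fib k) - (\<phi>^k - (1-\<phi>)^k)" for k
  have "e (Suc (Suc n)) = e (Suc n) + e n - (\<phi>^n - (1-\<phi>)^n) * (\<phi>^2 - \<phi> - 1)"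
    unfolding e_def by (simp add: algebra_simps power2_eq_square)
  moreover have "M dvd e (Suc n)" "M dvd e n" using 3 unfolding e_def by auto
  moreover have "M dvd (\<phi>^n - (1-\<phi>)^n) * (\<phi>^2 - \<phi> - 1)" using h by simp
  ultimately have "M dvd e (Suc (Suc n))" by simp
  thus ?case unfolding e_def .
qed

lemma cassini_int:
  "int (fib (Suc n))^2 - int (fib (Suc n)) * int (fib n) - int (fib n)^2 = (-1)^n"
proof (induction n)
  case 0 thus ?case by simp
next
  case (Suc n)
  have "int (fib (Suc (Suc n))) = int (fib (Suc n)) + int (fib n)" by simp
  thus ?case using Suc by (simp add: algebra_simps power2_eq_square)
qed

definition fibpairs11 :: "(nat \<times> nat) set" where
  "fibpairs11 = {(0,1),(1,1),(1,2),(2,3),(3,5),(5,8),(8,2),(2,10),(10,1),(1,0)}"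

lemma fibpairs11_step: "(x,y) \<in> fibpairs11 \<Longrightarrow> (y, (x+y) mod 11) \<in> fibpairs11"
  unfolding fibpairs11_def by (simp only: insert_iff empty_iff prod.inject) (elim disjE conjE; simp)

lemma fib_pairs_mod11: "(fib n mod 11, fib (Suc n) mod 11) \<in> fibpairs11"
proof (induction n)
  case 0 thus ?case by (simp add: fibpairs11_def)
next
  case (Suc n)
  have "fib (Suc (Suc n)) mod 11 = (fib n mod 11 + fib (Suc n) mod 11) mod 11"
    by (simp add: mod_add_eq add.commute)
  thus ?case using fibpairs11_step[OF Suc] by simp
qed

lemma fib_mod11_vals: "fib n mod 11 \<in> {0,1,2,3,5,8,10}"
  using fib_pairs_mod11[of n] unfolding fibpairs11_def by blast

lemma pow5_vals: "(z::int)^5 mod 11 = 0 \<or> z^5 mod 11 = 1 \<or> z^5 mod 11 = 10"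
  using mod11_pow5_cases[of z] by auto

lemma pow5_zero_iff: "(z::int)^5 mod 11 = 0 \<longleftrightarrow> 11 dvd z"
  using mod11_pow5_cases[of z] by auto

lemma neg1_pow_mod11: "((-1::int)^i) mod 11 = 10^i mod 11"
proof -
  have "((-1::int)^i) mod 11 = ((-1) mod 11)^i mod 11" by (rule power_mod[symmetric])
  thus ?thesis by simp
qed

lemma key:
  fixes \<phi> x u e :: int and a :: nat
  assumes a: "a \<ge> 2" and h85: "121 dvd \<phi> - 85" and h\<phi>: "11^a dvd \<phi>^2 - \<phi> - 1"
    and e: "e = 1 \<or> e = -1" and u5: "u^5 mod 11 = e mod 11"
    and hu: "11^a dvd u^2 - (2*\<phi>-1)*x*u - e"
  shows "\<exists>n. 11^a dvd int (fib n) - x"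
proof -
  define m where "m = (11::int)^a"
  define r where "r = 2*\<phi> - 1"
  define \<psi> where "\<psi> = 1 - \<phi>"
  have m11: "(11::int) dvd m" unfolding m_def using a by (simp add: dvd_power)
  have "e mod 11 = 1 \<or> e mod 11 = 10" using e by auto
  hence nu: "\<not> 11 dvd u" using u5 pow5_zero_iff[of u] by auto
  have "11 dvd \<phi> - 85" using h85 by (rule dvd_trans[rotated]) simp
  hence phi11: "\<phi> mod 11 = 8" using mod_eq_dvd_iff[of \<phi> 11 85] by simp
  have "r mod 11 = (2*(\<phi> mod 11) - 1) mod 11" unfolding r_def by (metis mod_diff_left_eq mod_mult_right_eq)
  hence r11: "r mod 11 = 4" using phi11 by simp
  hence nr: "\<not> 11 dvd r" by auto
  define g where "g = nat (\<phi> mod 11^a)"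
  have pr: "residue_primroot (11^a) g" unfolding g_def using primroot_phi[OF a h85] .
  have m1: "(11::nat)^a > 1" using a by (intro one_less_power) auto
  define k where "k = nat (u mod m)"
  have ki: "int k = u mod m" unfolding k_def m_def by simp
  have "\<not> (11::nat) dvd k"
  proof
    assume "11 dvd k"
    hence "(11::int) dvd u mod m" using ki by (metis of_nat_dvd_iff of_nat_numeral)
    moreover have "u = u mod m + m * (u div m)" by simp
    ultimately have "11 dvd u" using m11 by (metis dvd_add dvd_mult2)
    thus False using nu by simp
  qed
  hence "coprime 11 k" using prime_imp_coprime[OF p11n] by simp
  hence "coprime k (11^a)" by (simp add: coprime_commute)
  moreover have "k > 0" using \<open>\<not> 11 dvd k\<close> by (intro Nat.gr0I) auto
  moreover have "k \<le> 11^a"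
  proof -
    have "u mod m < m" unfolding m_def by simp
    hence "int k < int (11^a)" using ki unfolding m_def by simp
    thus ?thesis by linarith
  qed
  ultimately have "k \<in> totatives (11^a)" by (simp add: in_totatives_iff)
  hence "k \<in> (\<lambda>i. g ^ i mod 11 ^ a) ` {..<totient (11 ^ a)}"
    using bij_betw_imp_surj_on[OF residue_primroot_is_generator[OF m1 pr]] by simp
  then obtain i where "k = g^i mod 11^a" by (rule imageE)
  hence "g^i mod 11^a = k" by simp
  hence "int (g^i mod 11^a) = u mod m" using ki by simp
  hence "(\<phi> mod m)^i mod m = u mod m" unfolding g_def m_def by (simp add: of_nat_mod)
  hence "\<phi>^i mod m = u mod m" by (simp add: power_mod)
  hence hi: "m dvd \<phi>^i - u" by (simp add: mod_eq_dvd_iff)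
  have "11 dvd \<phi>^i - u" using hi m11 by (rule dvd_trans[rotated])
  hence "\<phi>^i mod 11 = u mod 11" by (simp add: mod_eq_dvd_iff)
  hence "(\<phi>^i)^5 mod 11 = u^5 mod 11" by (metis power_mod)
  moreover have "(\<phi>^i)^5 mod 11 = 10^i mod 11"
  proof -
    have "(\<phi>^i)^5 = (\<phi>^5)^i" by (simp add: power_mult[symmetric] mult.commute)
    moreover have "\<phi>^5 mod 11 = 10" using phi11 pow5_mod11[of \<phi>] by simp
    ultimately show ?thesis by (metis power_mod)
  qed
  ultimately have "(-1)^i mod 11 = e mod 11" using u5 neg1_pow_mod11 by simp
  hence ei: "(-1::int)^i = e" using e by (cases "even i") auto
  have b: "m dvd r * int (fib i) - (\<phi>^i - \<psi>^i)" unfolding m_def r_def \<psi>_def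
    using binet_mod[OF h\<phi>] .
  have "\<phi>*\<psi> - (-1) = - (\<phi>^2 - \<phi> - 1)" unfolding \<psi>_def by (simp add: algebra_simps power2_eq_square)
  hence "m dvd \<phi>*\<psi> - (-1)" using h\<phi> unfolding m_def by (simp only: dvd_minus_iff)
  hence "[\<phi>*\<psi> = -1] (mod m)" by (simp add: cong_iff_dvd_diff)
  hence "[(\<phi>*\<psi>)^i = (-1)^i] (mod m)" by (rule cong_pow)
  hence c: "m dvd (\<phi>*\<psi>)^i - e" using ei by (simp add: cong_iff_dvd_diff)
  have hu': "m dvd u^2 - r*x*u - e" using hu unfolding m_def r_def .
  have "u*r*(int (fib i) - x) = u*(r * int (fib i) - (\<phi>^i - \<psi>^i)) + (u-\<phi>^i)*(\<phi>^i-\<psi>^i)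
      - (\<phi>^i - u)*(-(\<phi>^i+u)) - ((\<phi>*\<psi>)^i - e) + (u^2 - r*x*u - e)"
    by (simp add: algebra_simps power_mult_distrib power2_eq_square)
  moreover have "m dvd u*(r * int (fib i) - (\<phi>^i - \<psi>^i)) + (u-\<phi>^i)*(\<phi>^i-\<psi>^i)
      - (\<phi>^i - u)*(-(\<phi>^i+u)) - ((\<phi>*\<psi>)^i - e) + (u^2 - r*x*u - e)"
  proof -
    have "m dvd u - \<phi>^i" using hi by (simp add: dvd_diff_commute)
    hence d2: "m dvd (u-\<phi>^i)*(\<phi>^i-\<psi>^i)" by (rule dvd_mult2)
    have d1: "m dvd u*(r * int (fib i) - (\<phi>^i - \<psi>^i))" using b by (rule dvd_mult)
    have d3: "m dvd (\<phi>^i - u)*(-(\<phi>^i+u))" using hi by (rule dvd_mult2)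
    show ?thesis by (rule dvd_add[OF dvd_diff[OF dvd_diff[OF dvd_add[OF d1 d2] d3] c] hu'])
  qed
  ultimately have "m dvd u*r*(int (fib i) - x)" by simp
  hence "m dvd u*(r*(int (fib i) - x))" by (simp add: mult.assoc)
  hence "m dvd r*(int (fib i) - x)" unfolding m_def using nu by (rule dvd11pow_cancel)
  hence "m dvd int (fib i) - x" unfolding m_def using nr by (rule dvd11pow_cancel)
  thus ?thesis unfolding m_def by blast
qed


definition Sq :: "nat \<Rightarrow> int \<Rightarrow> bool" where "Sq a z \<longleftrightarrow> (\<exists>t. (11::int)^a dvd t^2 - z)"

lemma half_exists: "\<exists>u j. 2*u = A + (11::int)^a * j"
proof -
  have "odd ((11::int)^a)" by simp
  then obtain q where q: "(11::int)^a = 2*q + 1" by (metis oddE)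
  show ?thesis by (rule exI[of _ "A*(q+1)"], rule exI[of _ A]) (simp add: q algebra_simps)
qed

lemma quad_root:
  fixes \<phi> x s u j e :: int
  assumes h\<phi>: "11^a dvd \<phi>^2 - \<phi> - 1" and hs: "11^a dvd s^2 - (5*x^2 + 4*e)"
    and h2: "2*u = (2*\<phi>-1)*x + s + 11^a * j"
  shows "11^a dvd u^2 - (2*\<phi>-1)*x*u - e"
proof -
  define m where "m = (11::int)^a"
  define r where "r = 2*\<phi>-1"
  have h2': "2*u = r*x + s + m*j" using h2 unfolding m_def r_def .
  have "4*(u^2 - r*x*u - e) = (2*u)^2 - 2*r*x*(2*u) - 4*e" by (simp add: algebra_simps power2_eq_square)
  also have "\<dots> = (r*x + s + m*j)^2 - 2*r*x*(r*x + s + m*j) - 4*e" by (simp only: h2')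
  also have "\<dots> = (s^2 - (5*x^2 + 4*e)) - 4*x^2*(\<phi>^2-\<phi>-1) + m*(2*(r*x+s)*j + m*j^2 - 2*r*x*j)"
    unfolding r_def by (simp add: algebra_simps power2_eq_square)
  finally have eq: "4*(u^2 - r*x*u - e) = (s^2 - (5*x^2 + 4*e)) - 4*x^2*(\<phi>^2-\<phi>-1) + m*(2*(r*x+s)*j + m*j^2 - 2*r*x*j)" .
  have "m dvd 4*(u^2 - r*x*u - e)" unfolding eq 
    using dvd_add[OF dvd_diff[OF hs[folded m_def] dvd_mult[OF h\<phi>[folded m_def], of "4*x^2"]] dvd_triv_left] .
  hence "m dvd 4*(u^2 - r*x*u - e)" .
  thus ?thesis unfolding m_def r_def by (rule dvd11pow_cancel) simp
qed

lemma sq_poly_mod11: "(5*(x::int)^2 + c) mod 11 = (5*(x mod 11)^2 + c) mod 11"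
proof -
  have "[5*x^2 + c = 5*(x mod 11)^2 + c] (mod 11)"
    by (intro cong_add cong_mult cong_pow cong_refl) (simp add: cong_def)
  thus ?thesis by (simp add: cong_def)
qed

lemma pow5_prod:
  fixes v w :: int
  assumes "11 dvd v*w + 1" "v^5 mod 11 \<noteq> 1" shows "w^5 mod 11 = 1"
proof -
  have vw: "(v*w) mod 11 = 10" using assms(1) by presburger
  hence "(v*w)^5 mod 11 = 10" using pow5_mod11[of "v*w"] by simp
  hence "(v^5 mod 11) * (w^5 mod 11) mod 11 = 10" by (simp add: power_mult_distrib mod_mult_eq)
  moreover have "v^5 mod 11 = 0 \<or> v^5 mod 11 = 10" using assms(2) pow5_vals[of v] by auto
  moreover have "w^5 mod 11 = 0 \<or> w^5 mod 11 = 1 \<or> w^5 mod 11 = 10" using pow5_vals[of w] by auto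
  ultimately show ?thesis by auto
qed

lemma mod11_of_2u:
  fixes u A j :: int
  assumes "2*u = A + 11^a*j" "a \<ge> 1"
  shows "u mod 11 = (6*A) mod 11"
proof -
  have "(11::int) dvd 11^a" using assms(2) by (simp add: dvd_power)
  then obtain q where q: "(11::int)^a = 11*q" by (auto elim: dvdE)
  have "2*u = A + 11*(q*j)" using assms(1) q by (simp add: mult.assoc)
  hence "u - 6*A = 11*(6*(q*j) - u)" by presburger
  hence "11 dvd u - 6*A" by (rule dvdI)
  thus ?thesis by (simp add: mod_eq_dvd_iff)
qed

lemma branchB:
  fixes \<phi> x s :: int and a :: nat
  assumes a: "a \<ge> 2" and h85: "121 dvd \<phi> - 85" and h\<phi>: "11^a dvd \<phi>^2 - \<phi> - 1"
    and x: "x mod 11 = 2 \<or> x mod 11 = 5" and hs: "11^a dvd s^2 - (5*x^2 - 4)"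
  shows "\<exists>n. 11^a dvd int (fib n) - x"
proof -
  obtain u j where uj: "2*u = ((2*\<phi>-1)*x + s) + 11^a*j" using half_exists by blast
  have hs': "11^a dvd s^2 - (5*x^2 + 4*(-1))" using hs by simp
  have root: "11^a dvd u^2 - (2*\<phi>-1)*x*u - (-1)"
    using quad_root[OF h\<phi> hs'] uj by (simp add: add.assoc)
  have "11 dvd \<phi> - 85" using h85 by (rule dvd_trans[rotated]) simp
  hence phi11: "\<phi> mod 11 = 8" using mod_eq_dvd_iff[of \<phi> 11 85] by simp
  have "(11::int) dvd 11^a" using a by (simp add: dvd_power)
  hence s11: "11 dvd s^2 - (5*x^2 - 4)" using hs by (rule dvd_trans)
  hence s11': "s^2 mod 11 = (5*x^2-4) mod 11" by (simp add: mod_eq_dvd_iff)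
  have "u mod 11 = (6*((2*\<phi>-1)*x + s)) mod 11" using mod11_of_2u[OF uj] a by simp
  also have "\<dots> = (6*((2*(\<phi> mod 11)-1)*(x mod 11) + s mod 11)) mod 11"
  proof -
    have "[6*((2*\<phi>-1)*x + s) = 6*((2*(\<phi> mod 11)-1)*(x mod 11) + s mod 11)] (mod 11)"
      by (intro cong_add cong_mult cong_diff cong_refl) (simp_all add: cong_def)
    thus ?thesis by (simp add: cong_def)
  qed
  finally have umod: "u mod 11 = (6*(15*(x mod 11) + s mod 11)) mod 11" using phi11 by simp
  have sq: "(s mod 11)^2 mod 11 = (5*(x mod 11)^2 - 4) mod 11"
    using s11' sq_poly_mod11[of x "-4"] by (simp add: power_mod)
  have "u^5 mod 11 = 10"
    unfolding pow5_mod11[of u] umod using x sq by (cases s rule: mod11_cases) auto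
  hence "u^5 mod 11 = (-1) mod 11" by simp
  from key[OF a h85 h\<phi> _ this root] show ?thesis by simp
qed


lemma branchA:
  fixes \<phi> x :: int and a :: nat
  assumes a: "a \<ge> 2" and h85: "121 dvd \<phi> - 85" and h\<phi>: "11^a dvd \<phi>^2 - \<phi> - 1"
    and x: "x mod 11 \<in> {0,1,3,8,10}"
  shows "\<exists>n. 11^a dvd int (fib n) - x"
proof -
  define d where "d = 5*x^2 + 4"
  have "d mod 11 = (5*(x mod 11)^2 + 4) mod 11" unfolding d_def by (rule sq_poly_mod11)
  hence "d mod 11 \<in> {1,3,4,5,9}" using x by auto
  hence "d^5 mod 11 = 1" using mod11_pow5_cases[of d] by auto
  then obtain s where hs: "11^a dvd s^2 - d" using sqrt_lift by blast
  have hs1: "11^a dvd s^2 - (5*x^2 + 4*1)" using hs unfolding d_def by simp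
  have hs2: "11^a dvd (-s)^2 - (5*x^2 + 4*1)" using hs unfolding d_def by simp
  obtain u1 j1 where uj1: "2*u1 = ((2*\<phi>-1)*x + s) + 11^a*j1" using half_exists by blast
  obtain u2 j2 where uj2: "2*u2 = ((2*\<phi>-1)*x + (-s)) + 11^a*j2" using half_exists by blast
  have root1: "11^a dvd u1^2 - (2*\<phi>-1)*x*u1 - 1"
    using quad_root[OF h\<phi> hs1] uj1 by (simp add: add.assoc)
  have root2: "11^a dvd u2^2 - (2*\<phi>-1)*x*u2 - 1"
    using quad_root[OF h\<phi> hs2] uj2 by (simp add: add.assoc)
  define m where "m = (11::int)^a"
  define r where "r = 2*\<phi> - 1"
  have e1: "2*u1 = (r*x + s) + m*j1" using uj1 unfolding m_def r_def .
  have e2: "2*u2 = (r*x - s) + m*j2" using uj2 unfolding m_def r_def by simp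
  have "4*(u1*u2+1) = (2*u1)*(2*u2) + 4" by (simp add: algebra_simps)
  also have "\<dots> = ((r*x + s) + m*j1)*((r*x - s) + m*j2) + 4" by (simp only: e1 e2)
  also have "\<dots> = -(s^2 - d) + 4*x^2*(\<phi>^2-\<phi>-1) + m*((r*x+s)*j2 + (r*x-s)*j1 + m*j1*j2)"
    unfolding r_def d_def by (simp add: algebra_simps power2_eq_square)
  finally have eq: "4*(u1*u2+1) = -(s^2 - d) + 4*x^2*(\<phi>^2-\<phi>-1) + m*((r*x+s)*j2 + (r*x-s)*j1 + m*j1*j2)" .
  have "m dvd -(s^2 - d)" using hs unfolding m_def by (simp only: dvd_minus_iff)
  hence "m dvd 4*(u1*u2+1)" unfolding eq
    using dvd_add[OF dvd_add[OF _ dvd_mult[OF h\<phi>[folded m_def], of "4*x^2"]] dvd_triv_left] by blast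
  hence "m dvd u1*u2+1" unfolding m_def by (rule dvd11pow_cancel) simp
  moreover have "(11::int) dvd m" unfolding m_def using a by (simp add: dvd_power)
  ultimately have p: "11 dvd u1*u2+1" by (metis dvd_trans)
  show ?thesis
  proof (cases "u1^5 mod 11 = 1")
    case True
    hence "u1^5 mod 11 = 1 mod 11" by simp
    from key[OF a h85 h\<phi> _ this] root1 show ?thesis by simp
  next
    case False
    hence "u2^5 mod 11 = 1" using pow5_prod[OF p] by simp
    hence "u2^5 mod 11 = 1 mod 11" by simp
    from key[OF a h85 h\<phi> _ this] root2 show ?thesis by simp
  qed
qed

lemma fib_generic:
  fixes x :: int and a :: nat
  assumes a: "a \<ge> 2" and x: "x mod 11 \<in> {0,1,2,3,8,10}"
  shows "\<exists>n. 11^a dvd int (fib n) - x"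
proof -
  obtain \<phi> :: int where h85: "121 dvd \<phi> - 85" and h\<phi>: "11^a dvd \<phi>^2 - \<phi> - 1" using phi_lift[OF a] by blast
  show ?thesis
  proof (cases "x mod 11 = 2")
    case True
    define d where "d = 5*x^2 + (-4)"
    have "d mod 11 = (5*(x mod 11)^2 + (-4)) mod 11" unfolding d_def by (rule sq_poly_mod11)
    hence "d mod 11 = 5" using True by simp
    hence "d^5 mod 11 = 1" using mod11_pow5_cases[of d] by simp
    then obtain s where hs: "11^a dvd s^2 - d" using sqrt_lift by blast
    hence "11^a dvd s^2 - (5*x^2 - 4)" unfolding d_def by simp
    from branchB[OF a h85 h\<phi> _ this] True show ?thesis by simp
  next
    case False
    hence "x mod 11 \<in> {0,1,3,8,10}" using x by auto
    from branchA[OF a h85 h\<phi> this] show ?thesis .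
  qed
qed

lemma fib_five:
  fixes x :: int and a :: nat
  assumes a: "a \<ge> 2" and x: "x mod 11 = 5" and sq: "Sq a (5*x^2 - 4)"
  shows "\<exists>n. 11^a dvd int (fib n) - x"
proof -
  obtain \<phi> :: int where h85: "121 dvd \<phi> - 85" and h\<phi>: "11^a dvd \<phi>^2 - \<phi> - 1" using phi_lift[OF a] by blast
  obtain s where "11^a dvd s^2 - (5*x^2 - 4)" using sq unfolding Sq_def by blast
  from branchB[OF a h85 h\<phi> _ this] x show ?thesis by simp
qed

lemma fib_sq:
  assumes "int (fib n) mod 11 = 5"
  shows "\<exists>t. t^2 = 5*int (fib n)^2 - 4"
proof -
  define F where "F = int (fib n)"
  define L where "L = 2*int (fib (Suc n)) - F"
  have "L^2 - 5*F^2 = 4*(int (fib (Suc n))^2 - int (fib (Suc n)) * F - F^2)"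
    unfolding L_def by (simp add: algebra_simps power2_eq_square)
  hence eq: "L^2 = 5*F^2 + 4*(-1)^n" using cassini_int[of n] unfolding F_def by simp
  show ?thesis
  proof (cases "even n")
    case True
    hence "L^2 = 5*F^2 + 4" using eq by simp
    hence "L^2 mod 11 = (5*(F mod 11)^2 + 4) mod 11" using sq_poly_mod11[of F 4] by simp
    hence "(L mod 11)^2 mod 11 = 8" using assms unfolding F_def by (simp add: power_mod)
    hence False by (cases L rule: mod11_cases) auto
    thus ?thesis ..
  next
    case False
    hence "L^2 = 5*F^2 - 4" using eq by simp
    thus ?thesis unfolding F_def by blast
  qed
qed


lemma Sq_mod: assumes d: "11^a dvd z - z'" shows "Sq a z \<longleftrightarrow> Sq a z'"
proof -
  have "11^a dvd t^2 - z \<longleftrightarrow> 11^a dvd t^2 - z'" for t :: int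
  proof
    assume "11^a dvd t^2 - z"
    hence "11^a dvd (t^2 - z) + (z - z')" using d by (rule dvd_add)
    moreover have "(t^2 - z) + (z - z') = t^2 - z'" by simp
    ultimately show "11^a dvd t^2 - z'" by simp
  next
    assume "11^a dvd t^2 - z'"
    hence "11^a dvd (t^2 - z') - (z - z')" using d by (rule dvd_diff)
    moreover have "(t^2 - z') - (z - z') = t^2 - z" by simp
    ultimately show "11^a dvd t^2 - z" by simp
  qed
  thus ?thesis unfolding Sq_def by simp
qed

lemma dvd11_sq: assumes "(11::int) dvd t^2" shows "11 dvd t"
  using assms p11 by (simp add: prime_dvd_power_iff)

lemma Sq_121: assumes b: "b \<ge> 2" shows "Sq b (121*w) \<longleftrightarrow> Sq (b-2) w"
proof -
  have bb: "(11::int)^b = 121 * 11^(b-2)"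
  proof -
    have "b = 2 + (b-2)" using b by simp
    hence "(11::int)^b = 11^2 * 11^(b-2)" by (metis power_add)
    thus ?thesis by simp
  qed
  show ?thesis
  proof
    assume "Sq b (121*w)"
    then obtain t where t: "11^b dvd t^2 - 121*w" unfolding Sq_def by blast
    have "(11::int) dvd 11^b" using b by (simp add: dvd_power)
    hence "11 dvd t^2 - 121*w" using t by (rule dvd_trans)
    moreover have "(11::int) dvd 121*w" by simp
    ultimately have "11 dvd (t^2 - 121*w) + 121*w" by (rule dvd_add)
    hence "11 dvd t^2" by simp
    hence "11 dvd t" by (rule dvd11_sq)
    then obtain t' where t': "t = 11*t'" by (auto elim: dvdE)
    have e: "t^2 - 121*w = 121*(t'^2 - w)" unfolding t' by (simp add: algebra_simps power2_eq_square)
    have "121 * 11^(b-2) dvd 121*(t'^2 - w)" using t by (simp only: e bb)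
    moreover have "(121::int) \<noteq> 0" by simp
    ultimately have "11^(b-2) dvd t'^2 - w" using dvd_mult_cancel_left[of 121 "11^(b-2)" "t'^2-w"] by blast
    thus "Sq (b-2) w" unfolding Sq_def by blast
  next
    assume "Sq (b-2) w"
    then obtain t where t: "11^(b-2) dvd t^2 - w" unfolding Sq_def by blast
    have "(11*t)^2 - 121*w = 121*(t^2 - w)" by (simp add: algebra_simps power2_eq_square)
    moreover have "121 * 11^(b-2) dvd 121*(t^2 - w)" using t by (rule mult_dvd_mono[OF dvd_refl])
    ultimately show "Sq b (121*w)" unfolding Sq_def bb by metis
  qed
qed

lemma Sq_div: assumes b: "b \<ge> 2" and "11 dvd z" "Sq b z" shows "121 dvd z"
proof -
  obtain t where t: "11^b dvd t^2 - z" using assms(3) unfolding Sq_def by blast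
  have bb: "(11::int)^b = 121 * 11^(b-2)"
  proof -
    have "b = 2 + (b-2)" using b by simp
    hence "(11::int)^b = 11^2 * 11^(b-2)" by (metis power_add)
    thus ?thesis by simp
  qed
  have "(11::int) dvd 11^b" using b by (simp add: dvd_power)
  hence "11 dvd t^2 - z" using t by (rule dvd_trans)
  hence "11 dvd (t^2 - z) + z" using assms(2) by (rule dvd_add)
  hence "11 dvd t^2" by simp
  hence "11 dvd t" by (rule dvd11_sq)
  then obtain t' where t': "t = 11*t'" by (auto elim: dvdE)
  have "121 dvd t^2" unfolding t' by (simp add: power2_eq_square)
  moreover have "121 dvd t^2 - z" using t bb dvd_trans[of 121 "11^b" "t^2-z"] by simp
  ultimately have "121 dvd t^2 - (t^2 - z)" by (rule dvd_diff)
  thus ?thesis by simp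
qed

lemma Sq_unit:
  assumes b: "b \<ge> 1" and nz: "\<not> 11 dvd z" shows "Sq b z \<longleftrightarrow> z^5 mod 11 = 1"
proof
  assume "Sq b z"
  then obtain t where t: "11^b dvd t^2 - z" unfolding Sq_def by blast
  have "(11::int) dvd 11^b" using b by (simp add: dvd_power)
  hence "11 dvd t^2 - z" using t by (rule dvd_trans)
  hence "(t^2) mod 11 = z mod 11" by (simp add: mod_eq_dvd_iff)
  hence A: "(t^2)^5 mod 11 = z^5 mod 11" by (metis power_mod)
  have "\<not> 11 dvd t"
  proof
    assume "11 dvd t"
    hence "11 dvd t^2" by (simp add: power2_eq_square)
    hence "11 dvd t^2 - (t^2 - z)" using \<open>11 dvd t^2 - z\<close> by (rule dvd_diff)
    thus False using nz by simp
  qed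
  hence B: "t^5 mod 11 = 1 \<or> t^5 mod 11 = 10" using pow5_vals[of t] pow5_zero_iff[of t] by auto
  have C: "(t^5)^2 mod 11 = (t^5 mod 11)^2 mod 11" by (simp add: power_mod)
  have D: "(t^2)^5 = (t^5)^2" by (simp add: power_mult[symmetric] mult.commute)
  have "(t^5)^2 mod 11 = 1" using B C by auto
  thus "z^5 mod 11 = 1" using A D by simp
next
  assume "z^5 mod 11 = 1"
  thus "Sq b z" unfolding Sq_def using sqrt_lift by blast
qed

lemma Sq_0: "Sq 0 z" unfolding Sq_def by simp

lemma Sq_mult:
  fixes y :: int
  assumes y: "11 dvd y" shows "Sq a (y*(y-4)) \<longleftrightarrow> Sq a (-y)"
proof (cases "a = 0")
  case True thus ?thesis by (simp add: Sq_0)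
next
  case False
  have a11: "(11::int) dvd 11^a" using False by (simp add: dvd_power)
  define w where "w = 4 - y"
  have "w mod 11 = 4" unfolding w_def using y by (simp add: mod_diff_right_eq[symmetric] mod_eq_0_iff_dvd)
  hence "w^5 mod 11 = 1" using mod11_pow5_cases[of w] by simp
  then obtain q where q: "11^a dvd q^2 - w" using sqrt_lift by blast
  have yw: "y*(y-4) = (-y)*w" unfolding w_def by (simp add: algebra_simps)
  show ?thesis unfolding yw
  proof
    assume "Sq a ((-y)*w)"
    then obtain t where t: "11^a dvd t^2 - (-y)*w" unfolding Sq_def by blast
    have nq: "\<not> 11 dvd q"
    proof
      assume "11 dvd q"
      hence "(11::int) dvd q^2" by (simp add: power2_eq_square)
      moreover have "11 dvd q^2 - w" using q a11 dvd_trans by blast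
      ultimately have "11 dvd q^2 - (q^2 - w)" by (rule dvd_diff)
      hence "11 dvd w" by simp
      thus False using \<open>w mod 11 = 4\<close> by auto
    qed
    have "coprime 11 q" using prime_imp_coprime[OF p11 nq] .
    hence "coprime q (11^a)" by (simp add: coprime_commute)
    then obtain q' where q': "[q*q' = 1] (mod 11^a)" using cong_solve_coprime_int by blast
    hence q'': "11^a dvd q*q' - 1" by (simp add: cong_iff_dvd_diff)
    have "(t*q')^2 - (-y) = q'^2*(t^2 - (-y)*w) + (-y)*((w - q^2)*q'^2 + (q*q' - 1)*(q*q'+1))"
      by (simp add: algebra_simps power2_eq_square)
    moreover have "11^a dvd (w - q^2)*q'^2" using q by (simp add: dvd_diff_commute)
    moreover have "11^a dvd (q*q' - 1)*(q*q'+1)" using q'' by simp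
    moreover have "11^a dvd q'^2*(t^2 - (-y)*w)" using t by (rule dvd_mult)
    ultimately have "11^a dvd (t*q')^2 - (-y)" by (metis dvd_add dvd_mult)
    thus "Sq a (-y)" unfolding Sq_def by blast
  next
    assume "Sq a (-y)"
    then obtain t where t: "11^a dvd t^2 - (-y)" unfolding Sq_def by blast
    have "(t*q)^2 - (-y)*w = q^2*(t^2 - (-y)) + (-y)*(q^2 - w)" by (simp add: algebra_simps power2_eq_square)
    moreover have "11^a dvd q^2*(t^2 - (-y)) + (-y)*(q^2 - w)" using t q by (intro dvd_add dvd_mult) 
    ultimately show "Sq a ((-y)*w)" unfolding Sq_def by metis
  qed
qed


lemma int_mod11: "int x mod 11 = int (x mod 11)" by (simp add: of_nat_mod)

lemma nat_mod_M:
  assumes "x < M" shows "(M::nat) dvd 0 \<or> True" by simp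

lemma fibmod_iff:
  fixes M x F :: nat
  assumes "x < M"
  shows "F mod M = x \<longleftrightarrow> int M dvd int F - int x"
proof -
  have "F mod M = x \<longleftrightarrow> int (F mod M) = int x" by simp
  also have "\<dots> \<longleftrightarrow> int F mod int M = int x mod int M" using assms by (simp add: of_nat_mod)
  also have "\<dots> \<longleftrightarrow> int M dvd int F - int x" by (rule mod_eq_dvd_iff)
  finally show ?thesis .
qed

lemma V_char:
  assumes a: "a \<ge> 2" and x: "x < 11^a"
  shows "x \<in> {fib n mod 11^a | n. True} \<longleftrightarrow>
           (x mod 11 \<in> {0,1,2,3,8,10} \<or> (x mod 11 = 5 \<and> Sq a (5*int x^2 - 4)))"
proof
  assume "x \<in> {fib n mod 11^a | n. True}"
  then obtain n where n: "fib n mod 11^a = x" by blast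
  have d: "int (11^a) dvd int (fib n) - int x" using fibmod_iff[OF x] n by blast
  have "(11::nat) dvd 11^a" using a by (simp add: dvd_power)
  hence xm: "x mod 11 = fib n mod 11" using n by (metis mod_mod_cancel)
  have "fib n mod 11 \<in> {0,1,2,3,5,8,10}" by (rule fib_mod11_vals)
  moreover have "Sq a (5*int x^2 - 4)" if five: "fib n mod 11 = 5"
  proof -
    have "int (fib n) mod 11 = 5" using five int_mod11[of "fib n"] by simp
    then obtain t where t: "t^2 = 5*int (fib n)^2 - 4" using fib_sq by blast
    have "t^2 - (5*int x^2 - 4) = 5*(int (fib n) + int x)*(int (fib n) - int x)"
      unfolding t by (simp add: algebra_simps power2_eq_square)
    moreover have "11^a dvd 5*(int (fib n) + int x)*(int (fib n) - int x)" using d by simp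
    ultimately show ?thesis unfolding Sq_def by metis
  qed
  ultimately show "x mod 11 \<in> {0,1,2,3,8,10} \<or> (x mod 11 = 5 \<and> Sq a (5*int x^2 - 4))"
    using xm by auto
next
  assume h: "x mod 11 \<in> {0,1,2,3,8,10} \<or> (x mod 11 = 5 \<and> Sq a (5*int x^2 - 4))"
  have "\<exists>n. 11^a dvd int (fib n) - int x"
  proof (cases "x mod 11 = 5")
    case True
    hence "int x mod 11 = 5" using int_mod11[of x] by simp
    moreover have "Sq a (5*int x^2 - 4)" using h True by auto
    ultimately show ?thesis using fib_five[OF a] by blast
  next
    case False
    hence "x mod 11 \<in> {0,1,2,3,8,10}" using h by auto
    hence "int x mod 11 \<in> {0,1,2,3,8,10}" using int_mod11[of x] by auto
    thus ?thesis by (rule fib_generic[OF a])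
  qed
  then obtain n where "11^a dvd int (fib n) - int x" by blast
  hence "fib n mod 11^a = x" using fibmod_iff[OF x] by simp
  thus "x \<in> {fib n mod 11^a | n. True}" by blast
qed

lemma card_res:
  assumes S: "S \<subseteq> {..<11}"
  shows "card {y::nat. y < 11*N \<and> y mod 11 \<in> S} = card S * N"
proof -
  define f where "f = (\<lambda>(i::nat,q::nat). i + 11*q)"
  have eq: "{y::nat. y < 11*N \<and> y mod 11 \<in> S} = f ` (S \<times> {..<N})"
  proof (intro equalityI subsetI)
    fix y assume "y \<in> {y::nat. y < 11*N \<and> y mod 11 \<in> S}"
    hence y: "y < 11*N" "y mod 11 \<in> S" by auto
    have "y div 11 < N" using y(1) by (simp add: div_less_iff_less_mult mult.commute)
    moreover have "y = f (y mod 11, y div 11)" unfolding f_def by simp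
    ultimately show "y \<in> f ` (S \<times> {..<N})" using y(2) by blast
  next
    fix y assume "y \<in> f ` (S \<times> {..<N})"
    then obtain i q where iq: "i \<in> S" "q < N" "y = i + 11*q" unfolding f_def by auto
    have "i < 11" using iq(1) S by auto
    hence "y mod 11 = i" "y < 11*N" using iq by auto
    thus "y \<in> {y::nat. y < 11*N \<and> y mod 11 \<in> S}" using iq by auto
  qed
  have "inj_on f (S \<times> {..<N})"
  proof (rule inj_onI)
    fix p1 p2 assume p: "p1 \<in> S \<times> {..<N}" "p2 \<in> S \<times> {..<N}" "f p1 = f p2"
    obtain i1 q1 i2 q2 where pp: "p1 = (i1,q1)" "p2 = (i2,q2)" by fastforce
    have "i1 < 11" "i2 < 11" using p S pp by auto
    moreover have "i1 + 11*q1 = i2 + 11*q2" using p(3) pp unfolding f_def by simp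
    ultimately have "i1 = i2" "q1 = q2" by presburger+
    thus "p1 = p2" using pp by simp
  qed
  moreover have "finite S" using S finite_subset by blast
  ultimately show ?thesis unfolding eq by (simp add: card_image card_cartesian_product)
qed

lemma card_res_pow:
  assumes S: "S \<subseteq> {..<11}" and b: "b \<ge> 1"
  shows "card {y::nat. y < 11^b \<and> y mod 11 \<in> S} = card S * 11^(b-1)"
proof -
  have "(11::nat)^b = 11 * 11^(b-1)" using b by (metis power_eq_if not_one_le_zero)
  thus ?thesis using card_res[OF S, of "11^(b-1)"] by simp
qed


lemma neg_pow5: "(- z)^5 mod 11 = 1 \<longleftrightarrow> (z::int) mod 11 \<in> {2,6,7,8,10}"
proof -
  have "(- z)^5 mod 11 = ((-z) mod 11)^5 mod 11" by (rule pow5_mod11)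
  also have "(-z) mod 11 = (if z mod 11 = 0 then 0 else 11 - z mod 11)" by (rule zmod_zminus1_eq_if)
  finally have e: "(- z)^5 mod 11 = (if z mod 11 = 0 then 0 else 11 - z mod 11)^5 mod 11" .
  show ?thesis unfolding e by (cases z rule: mod11_cases) simp_all
qed

lemma Sq_unit_nat:
  assumes b: "b \<ge> 1" and y: "\<not> 11 dvd (y::nat)"
  shows "Sq b (- int y) \<longleftrightarrow> y mod 11 \<in> {2,6,7,8,10}"
proof -
  have "\<not> (11::int) dvd int y" using y by (metis of_nat_dvd_iff of_nat_numeral)
  hence "\<not> (11::int) dvd - int y" by simp
  hence "Sq b (- int y) \<longleftrightarrow> (- int y)^5 mod 11 = 1" using Sq_unit[OF b] by blast
  also have "\<dots> \<longleftrightarrow> int y mod 11 \<in> {2,6,7,8,10}" by (rule neg_pow5)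
  also have "\<dots> \<longleftrightarrow> y mod 11 \<in> {2,6,7,8,10}" unfolding int_mod11 by auto
  finally show ?thesis .
qed

definition EE :: "nat \<Rightarrow> nat" where "EE b = card {y. y < 11^b \<and> Sq b (- int y)}"
definition DD :: "nat \<Rightarrow> nat" where "DD b = card {y. y < 11^b \<and> 11 dvd y \<and> Sq b (- int y)}"

lemma EE_split:
  assumes b: "b \<ge> 1" shows "EE b = 5*11^(b-1) + DD b"
proof -
  have eq: "{y. y < 11^b \<and> Sq b (- int y)} =
    {y. y < 11^b \<and> y mod 11 \<in> {2,6,7,8,10}} \<union> {y. y < 11^b \<and> 11 dvd y \<and> Sq b (- int y)}"
  proof (intro equalityI subsetI)
    fix y assume "y \<in> {y. y < 11^b \<and> Sq b (- int y)}"
    thus "y \<in> {y. y < 11^b \<and> y mod 11 \<in> {2,6,7,8,10}} \<union> {y. y < 11^b \<and> 11 dvd y \<and> Sq b (- int y)}"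
      using Sq_unit_nat[OF b, of y] by (cases "11 dvd y") auto
  next
    fix y assume h: "y \<in> {y. y < 11^b \<and> y mod 11 \<in> {2,6,7,8,10}} \<union> {y. y < 11^b \<and> 11 dvd y \<and> Sq b (- int y)}"
    show "y \<in> {y. y < 11^b \<and> Sq b (- int y)}"
    proof (cases "11 dvd y")
      case True thus ?thesis using h by auto
    next
      case False thus ?thesis using h Sq_unit_nat[OF b False] by auto
    qed
  qed
  have disj: "{y. y < 11^b \<and> y mod 11 \<in> {2,6,7,8,10}} \<inter> {y. y < 11^b \<and> 11 dvd y \<and> Sq b (- int y)} = {}"
    by auto
  have c1: "card {y. y < 11^b \<and> y mod 11 \<in> {2,6,7,8,10::nat}} = 5 * 11^(b-1)"
    using card_res_pow[OF _ b, of "{2,6,7,8,10}"] by simp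
  show ?thesis unfolding EE_def DD_def eq
    by (subst card_Un_disjoint) (use disj c1 in auto)
qed

lemma DD_rec:
  assumes b: "b \<ge> 2" shows "DD b = EE (b-2)"
proof -
  have bb: "(11::nat)^b = 121 * 11^(b-2)"
  proof -
    have "b = 2 + (b-2)" using b by simp
    hence "(11::nat)^b = 11^2 * 11^(b-2)" by (metis power_add)
    thus ?thesis by simp
  qed
  have eq: "{y. y < 11^b \<and> 11 dvd y \<and> Sq b (- int y)} = (\<lambda>z. 121*z) ` {z. z < 11^(b-2) \<and> Sq (b-2) (- int z)}"
  proof (intro equalityI subsetI)
    fix y assume "y \<in> {y. y < 11^b \<and> 11 dvd y \<and> Sq b (- int y)}"
    hence y: "y < 11^b" "11 dvd y" "Sq b (- int y)" by auto
    have "(11::int) dvd - int y" using y(2) by (metis dvd_minus_iff of_nat_dvd_iff of_nat_numeral)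
    hence "(121::int) dvd - int y" using Sq_div[OF b _ y(3)] by blast
    hence "(121::nat) dvd y" by (metis dvd_minus_iff of_nat_dvd_iff of_nat_numeral)
    then obtain z where z: "y = 121*z" by (auto elim: dvdE)
    have "z < 11^(b-2)" using y(1) unfolding z bb by simp
    moreover have "Sq (b-2) (- int z)" using y(3) Sq_121[OF b, of "- int z"] unfolding z by simp
    ultimately show "y \<in> (\<lambda>z. 121*z) ` {z. z < 11^(b-2) \<and> Sq (b-2) (- int z)}" using z by blast
  next
    fix y assume "y \<in> (\<lambda>z. 121*z) ` {z. z < 11^(b-2) \<and> Sq (b-2) (- int z)}"
    then obtain z where z: "y = 121*z" "z < 11^(b-2)" "Sq (b-2) (- int z)" by auto
    have "y < 11^b" using z(1,2) bb by simp
    moreover have "11 dvd y" using z(1) by simp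
    moreover have "Sq b (- int y)" using z(3) Sq_121[OF b, of "- int z"] unfolding z(1) by simp
    ultimately show "y \<in> {y. y < 11^b \<and> 11 dvd y \<and> Sq b (- int y)}" by blast
  qed
  have "inj_on (\<lambda>z::nat. 121*z) A" for A by (rule inj_onI) simp
  thus ?thesis unfolding DD_def EE_def eq by (simp add: card_image)
qed

lemma EE_0: "EE 0 = 1"
proof -
  have "{y. y < 11^0 \<and> Sq 0 (- int y)} = {0}" by (auto simp: Sq_0)
  thus ?thesis unfolding EE_def by simp
qed

lemma DD_1: "DD 1 = 1"
proof -
  have "{y::nat. y < 11^1 \<and> 11 dvd y \<and> Sq 1 (- int y)} = {0}"
  proof (intro equalityI subsetI)
    fix y assume "y \<in> {y::nat. y < 11^1 \<and> 11 dvd y \<and> Sq 1 (- int y)}"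
    thus "y \<in> {0}" by (auto elim: dvdE)
  next
    fix y assume "y \<in> {0::nat}"
    moreover have "Sq 1 0" unfolding Sq_def by (intro exI[of _ 0]) simp
    ultimately show "y \<in> {y::nat. y < 11^1 \<and> 11 dvd y \<and> Sq 1 (- int y)}" by simp
  qed
  thus ?thesis unfolding DD_def by simp
qed

lemma EE_closed: "24 * EE b = 11^(b+1) + (if even b then 13 else 23)"
proof -
  have "24 * EE b = 11^(b+1) + (if even b then 13 else 23) \<and>
        24 * EE (Suc b) = 11^(Suc b+1) + (if even (Suc b) then 13 else 23)"
  proof (induction b)
    case 0
    have "EE 1 = 6" using EE_split[of 1] DD_1 by simp
    thus ?case using EE_0 by simp
  next
    case (Suc b)
    have "EE (Suc (Suc b)) = 5*11^(Suc b) + EE b" using EE_split[of "Suc (Suc b)"] DD_rec[of "Suc (Suc b)"] by simp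
    hence "24 * EE (Suc (Suc b)) = 120*11^(Suc b) + 24 * EE b" by simp
    also have "\<dots> = 120*11^(Suc b) + 11^(b+1) + (if even b then 13 else 23)" using Suc by simp
    also have "\<dots> = 11^(Suc (Suc b) + 1) + (if even (Suc (Suc b)) then 13 else 23)" by simp
    finally show ?case using Suc by simp
  qed
  thus ?thesis by blast
qed


lemma lin_mod11:
  fixes r x :: int
  assumes "r mod 11 = 4" shows "(r*x + 2) mod 11 = (4*(x mod 11) + 2) mod 11"
proof -
  have "[r*x + 2 = (r mod 11)*(x mod 11) + 2] (mod 11)"
    by (intro cong_add cong_mult cong_refl) (simp_all add: cong_def)
  thus ?thesis using assms by (simp add: cong_def)
qed

lemma G2_card:
  assumes a: "a \<ge> 2"
  shows "card {x. x < 11^a \<and> x mod 11 = 5 \<and> Sq a (5*int x^2 - 4)} = DD a"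
proof -
  obtain \<phi> :: int where h85: "121 dvd \<phi> - 85" and h\<phi>: "11^a dvd \<phi>^2 - \<phi> - 1" using phi_lift[OF a] by blast
  define r where "r = 2*\<phi> - 1"
  define m where "m = (11::int)^a"
  have mpos: "m > 0" unfolding m_def by simp
  have m11: "(11::int) dvd m" unfolding m_def using a by (simp add: dvd_power)
  have "11 dvd \<phi> - 85" using h85 by (rule dvd_trans[rotated]) simp
  hence phi11: "\<phi> mod 11 = 8" using mod_eq_dvd_iff[of \<phi> 11 85] by simp
  have "r mod 11 = (2*(\<phi> mod 11) - 1) mod 11" unfolding r_def by (metis mod_diff_left_eq mod_mult_right_eq)
  hence r11: "r mod 11 = 4" using phi11 by simp
  hence nr: "\<not> 11 dvd r" by auto
  have r5: "m dvd r^2 - 5"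
  proof -
    have "r^2 - 5 = 4*(\<phi>^2 - \<phi> - 1)" unfolding r_def by (simp add: algebra_simps power2_eq_square)
    moreover have "m dvd 4*(\<phi>^2 - \<phi> - 1)" using h\<phi> unfolding m_def by (rule dvd_mult)
    ultimately show ?thesis by simp
  qed
  define f where "f x = nat ((r * int x + 2) mod m)" for x :: nat
  have fi: "int (f x) = (r * int x + 2) mod m" for x unfolding f_def using mpos by simp
  have fm: "m dvd int (f x) - (r * int x + 2)" for x
    unfolding fi by (simp add: mod_eq_dvd_iff[symmetric])
  have flt: "f x < 11^a" for x
  proof -
    have "(r * int x + 2) mod m < m" using mpos by simp
    hence "int (f x) < int (11^a)" unfolding fi m_def by simp
    thus ?thesis by linarith
  qed
  have sqf: "Sq a (5*int x^2 - 4) \<longleftrightarrow> Sq a (- int (f x))" if d11: "11 dvd f x" for x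
  proof -
    define Y where "Y = int (f x)"
    define P where "P = r * int x + 2"
    have "Y*(Y-4) - (5*int x^2 - 4) = (Y - P)*(Y + P - 4) + (r^2 - 5)*int x^2"
      unfolding P_def by (simp add: algebra_simps power2_eq_square)
    moreover have "m dvd (Y - P)*(Y + P - 4)" using fm[of x] unfolding Y_def P_def by simp
    moreover have "m dvd (r^2 - 5)*int x^2" using r5 by simp
    ultimately have "m dvd Y*(Y-4) - (5*int x^2 - 4)" by simp
    hence "Sq a (Y*(Y-4)) \<longleftrightarrow> Sq a (5*int x^2 - 4)" unfolding m_def by (rule Sq_mod)
    moreover have "(11::int) dvd Y" unfolding Y_def using d11 by (metis of_nat_dvd_iff of_nat_numeral)
    ultimately show ?thesis using Sq_mult unfolding Y_def by blast
  qed
  have f11: "11 dvd f x" if "x mod 11 = 5" for x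
  proof -
    have "int (f x) mod 11 = (r * int x + 2) mod m mod 11" using fi by simp
    also have "\<dots> = (r * int x + 2) mod 11" using m11 by (simp add: mod_mod_cancel)
    also have "\<dots> = (4*(int x mod 11) + 2) mod 11" using lin_mod11[OF r11] .
    also have "\<dots> = 0" using that int_mod11[of x] by simp
    finally have "(11::int) dvd int (f x)" by auto
    thus ?thesis by (metis of_nat_dvd_iff of_nat_numeral)
  qed
  define A where "A = {x. x < 11^a \<and> x mod 11 = 5 \<and> Sq a (5*int x^2 - 4)}"
  define B where "B = {y. y < 11^a \<and> 11 dvd y \<and> Sq a (- int y)}"
  have inj: "inj_on f A"
  proof (rule inj_onI)
    fix x1 x2 assume x: "x1 \<in> A" "x2 \<in> A" "f x1 = f x2"
    have "m dvd (int (f x1) - (r * int x1 + 2)) - (int (f x2) - (r * int x2 + 2))"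
      using fm[of x1] fm[of x2] by (rule dvd_diff)
    hence "m dvd r * (int x2 - int x1)" using x(3) by (simp add: algebra_simps)
    hence "m dvd int x2 - int x1" unfolding m_def using nr by (rule dvd11pow_cancel)
    moreover have "x1 < 11^a" using x(1) unfolding A_def by simp
    ultimately have "x2 mod 11^a = x1" using fibmod_iff[of x1 "11^a" x2] unfolding m_def by simp
    moreover have "x2 < 11^a" using x(2) unfolding A_def by simp
    ultimately show "x1 = x2" by simp
  qed
  have img: "f ` A = B"
  proof (intro equalityI subsetI)
    fix y assume "y \<in> f ` A"
    then obtain x where x: "x \<in> A" "y = f x" by auto
    have "x mod 11 = 5" "Sq a (5*int x^2 - 4)" using x(1) unfolding A_def by auto
    thus "y \<in> B" unfolding B_def x(2) using flt f11 sqf by blast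
  next
    fix y assume "y \<in> B"
    hence y: "y < 11^a" "11 dvd y" "Sq a (- int y)" unfolding B_def by auto
    have "coprime 11 r" using prime_imp_coprime[OF p11 nr] .
    hence "coprime r m" unfolding m_def by (simp add: coprime_commute)
    then obtain r' where r': "[r*r' = 1] (mod m)" using cong_solve_coprime_int by blast
    define x where "x = nat (((int y - 2)*r') mod m)"
    have xi: "int x = ((int y - 2)*r') mod m" unfolding x_def using mpos by simp
    have xlt: "x < 11^a"
    proof -
      have "((int y - 2)*r') mod m < m" using mpos by simp
      hence "int x < int (11^a)" unfolding xi m_def by simp
      thus ?thesis by linarith
    qed
    have "m dvd int x - (int y - 2)*r'" unfolding xi by (simp add: mod_eq_dvd_iff[symmetric])
    hence "m dvd r*(int x - (int y - 2)*r')" by simp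
    moreover have "m dvd (int y - 2)*(r*r' - 1)" using r' by (simp add: cong_iff_dvd_diff)
    ultimately have "m dvd r*(int x - (int y - 2)*r') + (int y - 2)*(r*r' - 1)" by simp
    moreover have "r*(int x - (int y - 2)*r') + (int y - 2)*(r*r' - 1) = (r*int x + 2) - int y"
      by (simp add: algebra_simps)
    ultimately have hx: "m dvd (r*int x + 2) - int y" by simp
    hence "int y mod m = (r*int x + 2) mod m" using mod_eq_dvd_iff[of "int y" m "r*int x + 2"] by (simp add: dvd_diff_commute)
    moreover have "int y mod m = int y" using y(1) unfolding m_def by simp
    ultimately have "int (f x) = int y" using fi by simp
    hence fx: "f x = y" by simp
    have "11 dvd (r*int x + 2) - int y" using hx m11 dvd_trans by blast
    moreover have "(11::int) dvd int y" using y(2) by (metis of_nat_dvd_iff of_nat_numeral)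
    ultimately have "11 dvd (r*int x + 2) - int y + int y" by (rule dvd_add)
    hence "(r*int x + 2) mod 11 = 0" by simp
    hence "(4*(int x mod 11) + 2) mod 11 = 0" using lin_mod11[OF r11] by simp
    hence "int x mod 11 = 5" by (cases "int x" rule: mod11_cases) simp_all
    hence x5: "x mod 11 = 5" using int_mod11[of x] by simp
    have "Sq a (5*int x^2 - 4)" using sqf[OF f11[OF x5]] fx y(3) by simp
    hence "x \<in> A" unfolding A_def using xlt x5 by simp
    thus "y \<in> f ` A" using fx by blast
  qed
  have "card A = card B" using card_image[OF inj] img by simp
  thus ?thesis unfolding A_def B_def DD_def .
qed

lemma card_V:
  assumes a: "a \<ge> 2"
  shows "264 * card {fib n mod 11^a | n. True} = 145 * 11^a + 11 * (if even a then 13 else 23)"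
proof -
  define G1 where "G1 = {x::nat. x < 11^a \<and> x mod 11 \<in> {0,1,2,3,8,10}}"
  define G2 where "G2 = {x. x < 11^a \<and> x mod 11 = 5 \<and> Sq a (5*int x^2 - 4)}"
  have eq: "{fib n mod 11^a | n. True} = G1 \<union> G2"
  proof (intro equalityI subsetI)
    fix x assume h: "x \<in> {fib n mod 11^a | n. True}"
    then obtain n where "x = fib n mod 11^a" by blast
    hence xl: "x < 11^a" by simp
    thus "x \<in> G1 \<union> G2" using h V_char[OF a xl] unfolding G1_def G2_def by auto
  next
    fix x assume h: "x \<in> G1 \<union> G2"
    hence xl: "x < 11^a" unfolding G1_def G2_def by auto
    thus "x \<in> {fib n mod 11^a | n. True}" using h V_char[OF a xl] unfolding G1_def G2_def by auto
  qed
  have disj: "G1 \<inter> G2 = {}" unfolding G1_def G2_def by auto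
  have fin: "finite G1" "finite G2" unfolding G1_def G2_def by auto
  have c1: "card G1 = 6 * 11^(a-1)" unfolding G1_def using card_res_pow[of "{0,1,2,3,8,10}" a] a by simp
  have c2: "card G2 = EE (a-2)" unfolding G2_def using G2_card[OF a] DD_rec[OF a] by simp
  have "card {fib n mod 11^a | n. True} = 6 * 11^(a-1) + EE (a-2)"
    unfolding eq using card_Un_disjoint[OF fin disj] c1 c2 by simp
  hence "264 * card {fib n mod 11^a | n. True} = 264 * 6 * 11^(a-1) + 11 * (24 * EE (a-2))" by simp
  also have "\<dots> = 264 * 6 * 11^(a-1) + 11 * (11^(a-1) + (if even (a-2) then 13 else 23))"
  proof -
    have h: "a - 2 + 1 = a - 1" using a by simp
    have E: "24 * EE (a-2) = 11^(a-1) + (if even (a-2) then 13 else 23)" using EE_closed[of "a-2"] unfolding h .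
    show ?thesis by (simp only: E)
  qed
  also have "\<dots> = 145 * 11^a + 11 * (if even a then 13 else 23)"
  proof -
    have "(11::nat)^a = 11 * 11^(a-1)" using a by (metis power_eq_if not_numeral_le_zero)
    moreover have "even (a-2) = even a" using a by auto
    ultimately show ?thesis by simp
  qed
  finally show ?thesis .
qed


theorem theorem5p7:
  shows "(\<lambda>a::nat. real (card {fib n mod 11 ^ a | n. True}) / real (11 ^ a))
           \<longlonglongrightarrow> 145 / 264"
proof -
  define f where "f a = real (card {fib n mod 11 ^ a | n. True}) / real (11 ^ a)" for a :: nat
  have bounds: "145/264 \<le> f a \<and> f a \<le> 145/264 + (1/11)^a" if a: "a \<ge> 2" for a :: nat
  proof -
    define X where "X = real (card {fib n mod 11 ^ a | n. True})"
    define P where "P = (11::real)^a"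
    define c where "c = real (if even a then 13 else 23 :: nat)"
    have Ppos: "P > 0" unfolding P_def by simp
    have c0: "0 \<le> c" "c \<le> 23" unfolding c_def by auto
    have "real (264 * card {fib n mod 11^a | n. True}) = real (145 * 11^a + 11 * (if even a then 13 else 23))"
      using card_V[OF a] by simp
    hence k: "264 * X = 145 * P + 11 * c" unfolding X_def P_def c_def by simp
    have fa: "f a = X / P" unfolding f_def X_def P_def by simp
    have diff: "X / P - 145/264 = 11*c/(264*P)" using k Ppos by (simp add: field_simps)
    have "0 \<le> 11*c/(264*P)" using c0 Ppos by simp
    moreover have "11*c/(264*P) \<le> 1/P"
    proof -
      have "11*c \<le> 264" using c0 by simp
      hence "11*c/(264*P) \<le> 264/(264*P)" using Ppos by (intro divide_right_mono) auto
      thus ?thesis using Ppos by simp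
    qed
    moreover have "(1/11::real)^a = 1/P" unfolding P_def by (simp add: power_one_over)
    ultimately show ?thesis unfolding fa using diff by linarith
  qed
  have lim: "(\<lambda>a::nat. 145/264 + (1/11::real)^a) \<longlonglongrightarrow> 145/264 + 0"
    by (intro tendsto_add tendsto_const LIMSEQ_power_zero) simp
  have ev1: "eventually (\<lambda>a. 145/264 \<le> f a) sequentially"
    using bounds by (intro eventually_sequentiallyI[of 2]) auto
  have ev2: "eventually (\<lambda>a. f a \<le> 145/264 + (1/11::real)^a) sequentially"
    using bounds by (intro eventually_sequentiallyI[of 2]) auto
  have "f \<longlonglongrightarrow> 145/264"
    using tendsto_sandwich[OF ev1 ev2 tendsto_const] lim by simp
  thus ?thesis unfolding f_def .
qed

end
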